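(* Let $\mathcal D\subseteq(0,1)$ be nonempty and $f:\mathcal D\to(0,1)$. If a finite automaton with $n$ states simulates $f$, then there exist polynomials $g,h\in\mathbb Z[x]$ of degree at most $n$, with $h(x)\neq0$ for all $x\in(0,1)$, such that $F=g/h$ satisfies $0<F(x)<1$ for all $x\in(0,1)$ and $F(p)=f(p)$ for all $p\in\mathcal D$.
   Context: For $w\in\{0,1\}^*$ let $n_i(w)$ be the number of $i$'s in $w$; $\mathbf P_p[w]=p^{n_1(w)}(1-p)^{n_0(w)}$, $\mathbf P_p[L]=\sum_{w\in L}\mathbf P_p[w]$. A simulation of $f:\mathcal D\to[0,1]$ is a pair of disjoint languages $L_0,L_1\subseteq\{0,1\}^*$ with $L_0\cup L_1$ prefix-free such that $\mathbf P_p[L_0\cup L_1]=1$ and $\mathbf P_p[L_1]=f(p)$ for all $p\in\mathcal D$. A finite automaton consists of finite state set $S$, start state $s_0$, transition function $\delta:S\times\{0,1\}\to S$ (extended to strings), and disjoint absorbing final-state sets $S_0,S_1$; $L_i$ is the set of strings $w$ with $\delta(s_0,w)\in S_i$ and $\delta(s_0,w')\notin S_0\cup S_1$ for every proper prefix $w'$ of $w$; the automaton simulates $f$ if $(L_0,L_1)$ is a simulation of $f$. *)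

theory Defs
  imports "HOL-Analysis.Analysis" "HOL-Computational_Algebra.Polynomial"
begin

(* Binary words: True encodes the letter 1, False the letter 0. *)

definition n1 :: "bool list \<Rightarrow> nat" where
  "n1 w = length (filter (\<lambda>b. b) w)"

definition n0 :: "bool list \<Rightarrow> nat" where
  "n0 w = length (filter (\<lambda>b. \<not> b) w)"

definition Pw :: "real \<Rightarrow> bool list \<Rightarrow> real" where
  "Pw p w = p ^ n1 w * (1 - p) ^ n0 w"

definition proper_prefix :: "bool list \<Rightarrow> bool list \<Rightarrow> bool" where
  "proper_prefix u v \<longleftrightarrow> (\<exists>z. z \<noteq> [] \<and> v = u @ z)"

definition prefix_free :: "bool list set \<Rightarrow> bool" where
  "prefix_free L \<longleftrightarrow> (\<forall>u\<in>L. \<forall>v\<in>L. \<not> proper_prefix u v)"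

(* (L0, L1) is a simulation of f on D; P_p[L] = c is expressed as the
   (absolutely convergent, nonnegative) sum over L having value c *)
definition simulation ::
  "real set \<Rightarrow> (real \<Rightarrow> real) \<Rightarrow> bool list set \<Rightarrow> bool list set \<Rightarrow> bool" where
  "simulation D f L0 L1 \<longleftrightarrow>
     L0 \<inter> L1 = {} \<and> prefix_free (L0 \<union> L1) \<and>
     (\<forall>p\<in>D. (Pw p has_sum 1) (L0 \<union> L1) \<and> (Pw p has_sum f p) L1)"

definition delta_star :: "('s \<Rightarrow> bool \<Rightarrow> 's) \<Rightarrow> 's \<Rightarrow> bool list \<Rightarrow> 's" where
  "delta_star \<delta> s w = foldl \<delta> s w"

definition finite_automaton ::
  "'s set \<Rightarrow> 's \<Rightarrow> ('s \<Rightarrow> bool \<Rightarrow> 's) \<Rightarrow> 's set \<Rightarrow> 's set \<Rightarrow> bool" where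
  "finite_automaton S s0 \<delta> S0 S1 \<longleftrightarrow>
     finite S \<and> s0 \<in> S \<and> (\<forall>s\<in>S. \<forall>b. \<delta> s b \<in> S) \<and>
     S0 \<subseteq> S \<and> S1 \<subseteq> S \<and> S0 \<inter> S1 = {} \<and>
     (\<forall>s\<in>S0. \<forall>b. \<delta> s b \<in> S0) \<and> (\<forall>s\<in>S1. \<forall>b. \<delta> s b \<in> S1)"

definition aut_lang ::
  "'s \<Rightarrow> ('s \<Rightarrow> bool \<Rightarrow> 's) \<Rightarrow> 's set \<Rightarrow> 's set \<Rightarrow> 's set \<Rightarrow> bool list set" where
  "aut_lang s0 \<delta> S0 S1 Si =
     {w. delta_star \<delta> s0 w \<in> Si \<and>
         (\<forall>w'. proper_prefix w' w \<longrightarrow> delta_star \<delta> s0 w' \<notin> S0 \<union> S1)}"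

definition automaton_simulates ::
  "'s set \<Rightarrow> 's \<Rightarrow> ('s \<Rightarrow> bool \<Rightarrow> 's) \<Rightarrow> 's set \<Rightarrow> 's set \<Rightarrow>
   real set \<Rightarrow> (real \<Rightarrow> real) \<Rightarrow> bool" where
  "automaton_simulates S s0 \<delta> S0 S1 D f \<longleftrightarrow>
     finite_automaton S s0 \<delta> S0 S1 \<and>
     simulation D f (aut_lang s0 \<delta> S0 S1 S0) (aut_lang s0 \<delta> S0 S1 S1)"

end

theory Submission
  imports Defs "Jordan_Normal_Form.Determinant" "Jordan_Normal_Form.Char_Poly"
begin

lemma proper_prefix_Nil[simp]: "\<not> proper_prefix u []"
  by (auto simp: proper_prefix_def)

lemma proper_prefix_Cons: "proper_prefix v (b#w) \<longleftrightarrow> v = [] \<or> (\<exists>v'. v = b#v' \<and> proper_prefix v' w)"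
  unfolding proper_prefix_def by (cases v) auto

lemma delta_star_Nil[simp]: "delta_star d s [] = s" by (simp add: delta_star_def)
lemma delta_star_Cons[simp]: "delta_star d s (b#w) = delta_star d (d s b) w" by (simp add: delta_star_def)
lemma delta_star_append: "delta_star d s (u@v) = delta_star d (delta_star d s u) v" by (simp add: delta_star_def)

fun okp :: "('s \<Rightarrow> bool \<Rightarrow> 's) \<Rightarrow> 's set \<Rightarrow> 's \<Rightarrow> bool list \<Rightarrow> bool" where
  "okp d F s [] = True"
| "okp d F s (b#w) = (s \<notin> F \<and> okp d F (d s b) w)"

lemma ok_iff_okp: "(\<forall>w'. proper_prefix w' w \<longrightarrow> delta_star d s w' \<notin> F) \<longleftrightarrow> okp d F s w"
proof (induction w arbitrary: s)
  case Nil then show ?case by simp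
next
  case (Cons b w)
  show ?case using Cons.IH[of "d s b"] by (auto simp: proper_prefix_Cons)
qed

lemma okp_append: "okp d F s (u@v) \<longleftrightarrow> okp d F s u \<and> (v \<noteq> [] \<longrightarrow> delta_star d s u \<notin> F) \<and> okp d F (delta_star d s u) v"
proof (induction u arbitrary: s)
  case Nil then show ?case by (cases v) auto
next
  case (Cons b u) then show ?case by auto
qed

lemma okp_nonempty: "okp d F s z \<Longrightarrow> z \<noteq> [] \<Longrightarrow> s \<notin> F"
  by (cases z) auto

lemma aut_lang_okp: "aut_lang s d S0 S1 Si = {w. delta_star d s w \<in> Si \<and> okp d (S0 \<union> S1) s w}"
  unfolding aut_lang_def ok_iff_okp ..

lemma Pw_Nil[simp]: "Pw p [] = 1" by (simp add: Pw_def n1_def n0_def)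
lemma Pw_Cons: "Pw p (b#w) = (if b then p else 1 - p) * Pw p w"
  by (simp add: Pw_def n1_def n0_def)

lemma Pw_pos: "0 < p \<Longrightarrow> p < 1 \<Longrightarrow> 0 < Pw p w"
  by (simp add: Pw_def)

locale aut =
  fixes s0 :: 's and d :: "'s \<Rightarrow> bool \<Rightarrow> 's" and S0 S1 :: "'s set"
  assumes disj: "S0 \<inter> S1 = {}"
begin

abbreviation "Fin \<equiv> S0 \<union> S1"

definition "R = {delta_star d s0 u | u. okp d Fin s0 u}"
definition "T = {t \<in> R. t \<notin> Fin \<and> (\<exists>z. delta_star d t z \<in> Fin \<and> okp d Fin t z)}"
definition harm :: "real \<Rightarrow> ('s \<Rightarrow> real) \<Rightarrow> bool" where
  "harm p y \<longleftrightarrow> (\<forall>s\<in>T. y s = p * y (d s True) + (1 - p) * y (d s False))"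

lemma s0_R: "s0 \<in> R"
  unfolding R_def by (rule CollectI, rule exI[of _ "[]"]) simp

lemma R_star: "t \<in> R \<Longrightarrow> okp d Fin t z \<Longrightarrow> delta_star d t z \<in> R"
proof -
  assume t: "t \<in> R" and z: "okp d Fin t z"
  then obtain u where u: "t = delta_star d s0 u" "okp d Fin s0 u" unfolding R_def by auto
  have "okp d Fin s0 (u @ z)" using u z okp_nonempty[OF z] by (simp add: okp_append)
  moreover have "delta_star d t z = delta_star d s0 (u @ z)" using u by (simp add: delta_star_append)
  ultimately show ?thesis unfolding R_def by blast
qed

lemma T_R: "t \<in> T \<Longrightarrow> t \<in> R" and T_notF: "t \<in> T \<Longrightarrow> t \<notin> Fin"
  unfolding T_def by auto

lemma prefT:
  assumes t: "t \<in> R" and z: "okp d Fin t z" and zF: "delta_star d t z \<in> Fin"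
    and pp: "proper_prefix z' z"
  shows "delta_star d t z' \<in> T"
proof -
  obtain r where r: "r \<noteq> []" "z = z' @ r" using pp unfolding proper_prefix_def by auto
  have o: "okp d Fin t z'" "delta_star d t z' \<notin> Fin" "okp d Fin (delta_star d t z') r"
    using z r by (auto simp: okp_append)
  have "delta_star d (delta_star d t z') r \<in> Fin" using zF r by (simp add: delta_star_append)
  then show ?thesis using o R_star[OF t o(1)] unfolding T_def by blast
qed

lemma T_escape: "s \<in> T \<Longrightarrow> \<exists>z. (\<forall>z'. proper_prefix z' z \<longrightarrow> delta_star d s z' \<in> T) \<and> delta_star d s z \<notin> T"
proof -
  assume s: "s \<in> T"
  then obtain z where z: "delta_star d s z \<in> Fin" "okp d Fin s z" unfolding T_def by auto
  show ?thesis
    using prefT[OF T_R[OF s] z(2) z(1)] z(1) T_notF by blast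
qed

lemma propagate:
  assumes h: "harm p y" and p: "0 < p" "p < 1" and ge: "\<forall>t. c \<le> y t" and ys: "y s = c"
    and pre: "\<forall>w'. proper_prefix w' w \<longrightarrow> delta_star d s w' \<in> T"
  shows "y (delta_star d s w) = c"
  using ys pre
proof (induction w arbitrary: s)
  case Nil then show ?case by simp
next
  case (Cons b w)
  have sT: "s \<in> T" using Cons.prems(2)[rule_format, of "[]"] by (simp add: proper_prefix_def)
  have eq: "y s = p * y (d s True) + (1 - p) * y (d s False)" using h sT unfolding harm_def by auto
  have a1: "c \<le> y (d s True)" "c \<le> y (d s False)" using ge by auto
  have "y (d s True) = c \<and> y (d s False) = c"
  proof (rule ccontr)
    assume "\<not> ?thesis"
    then have "c < y (d s True) \<or> c < y (d s False)" using a1 by auto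
    then have "p * c + (1 - p) * c < p * y (d s True) + (1 - p) * y (d s False)"
    proof
      assume "c < y (d s True)"
      then have "p * c < p * y (d s True)" using p by simp
      moreover have "(1 - p) * c \<le> (1 - p) * y (d s False)" using p a1 by (simp add: mult_left_mono)
      ultimately show ?thesis by linarith
    next
      assume "c < y (d s False)"
      then have "(1-p) * c < (1-p) * y (d s False)" using p by simp
      moreover have "p * c \<le> p * y (d s True)" using p a1 by (simp add: mult_left_mono)
      ultimately show ?thesis by linarith
    qed
    then show False using eq Cons.prems(1) by (simp add: algebra_simps)
  qed
  then have yb: "y (d s b) = c" by (cases b) auto
  have "\<forall>w'. proper_prefix w' w \<longrightarrow> delta_star d (d s b) w' \<in> T"
  proof (intro allI impI)
    fix w' assume "proper_prefix w' w"
    then have "proper_prefix (b#w') (b#w)" by (simp add: proper_prefix_Cons)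
    then show "delta_star d (d s b) w' \<in> T" using Cons.prems(2) by fastforce
  qed
  then show ?case using Cons.IH[OF yb] by simp
qed

lemma minp:
  assumes fin: "finite T" and h: "harm p y" and p: "0 < p" "p < 1"
    and out: "\<forall>t. t \<notin> T \<longrightarrow> 0 \<le> y t"
  shows "0 \<le> y t"
proof (rule ccontr)
  assume "\<not> 0 \<le> y t"
  then have tT: "t \<in> T" and yt: "y t < 0" using out by force+
  define c where "c = Min (y ` T)"
  have cle: "c \<le> y t" unfolding c_def using fin tT by simp
  have "c \<in> y ` T" unfolding c_def using fin tT by (intro Min_in) auto
  then obtain s where sT: "s \<in> T" and ys: "y s = c" by auto
  have ge: "\<forall>t. c \<le> y t"
  proof
    fix t' show "c \<le> y t'"
    proof (cases "t' \<in> T")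
      case True then show ?thesis unfolding c_def using fin by simp
    next
      case False then show ?thesis using out cle yt by force
    qed
  qed
  obtain z where z: "\<forall>z'. proper_prefix z' z \<longrightarrow> delta_star d s z' \<in> T" "delta_star d s z \<notin> T"
    using T_escape[OF sT] by blast
  have "y (delta_star d s z) = c" using propagate[OF h p ge ys z(1)] .
  moreover have "0 \<le> y (delta_star d s z)" using out z(2) by blast
  ultimately show False using cle yt by linarith
qed

lemma lang_split:
  assumes s: "s \<notin> Fin" and Si: "Si \<subseteq> Fin"
  shows "aut_lang s d S0 S1 Si = Cons True ` aut_lang (d s True) d S0 S1 Si \<union> Cons False ` aut_lang (d s False) d S0 S1 Si"
proof (rule Set.set_eqI)
  fix w show "w \<in> aut_lang s d S0 S1 Si \<longleftrightarrow> w \<in> Cons True ` aut_lang (d s True) d S0 S1 Si \<union> Cons False ` aut_lang (d s False) d S0 S1 Si"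
  proof (cases w)
    case Nil then show ?thesis using s Si by (auto simp: aut_lang_okp)
  next
    case (Cons b w')
    then show ?thesis using s by (cases b) (auto simp: aut_lang_okp)
  qed
qed

lemma lang_S1: "t \<in> S1 \<Longrightarrow> aut_lang t d S0 S1 S1 = {[]}"
proof (rule Set.set_eqI)
  fix w assume t: "t \<in> S1"
  show "w \<in> aut_lang t d S0 S1 S1 \<longleftrightarrow> w \<in> {[]}"
    using t by (cases w) (auto simp: aut_lang_okp)
qed

lemma lang_S0: "t \<in> S0 \<Longrightarrow> aut_lang t d S0 S1 S1 = {}"
proof (rule Set.set_eqI)
  fix w assume t: "t \<in> S0"
  show "w \<in> aut_lang t d S0 S1 S1 \<longleftrightarrow> w \<in> {}"
    using t disj by (cases w) (auto simp: aut_lang_okp)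
qed

lemma lang_dead:
  assumes t: "t \<in> T" and n: "d t b \<notin> T" "d t b \<notin> Fin"
  shows "aut_lang (d t b) d S0 S1 S1 = {}"
proof (rule ccontr)
  assume "aut_lang (d t b) d S0 S1 S1 \<noteq> {}"
  then obtain w where w: "delta_star d (d t b) w \<in> S1" "okp d Fin (d t b) w"
    by (auto simp: aut_lang_okp)
  have "okp d Fin t [b]" using T_notF[OF t] by simp
  then have "d t b \<in> R" using R_star[OF T_R[OF t], of "[b]"] by simp
  then have "d t b \<in> T" using n w unfolding T_def by blast
  then show False using n by simp
qed

definition U :: "real \<Rightarrow> 's \<Rightarrow> real" where
  "U p s = infsum (Pw p) (aut_lang s d S0 S1 S1)"

lemma summable_step:
  assumes sm: "Pw p summable_on aut_lang s d S0 S1 S1" and s: "s \<notin> Fin" and p: "0 < p" "p < 1"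
  shows "Pw p summable_on aut_lang (d s b) d S0 S1 S1"
proof -
  have "Cons b ` aut_lang (d s b) d S0 S1 S1 \<subseteq> aut_lang s d S0 S1 S1"
    using lang_split[OF s, of S1] by (cases b) auto
  then have "Pw p summable_on Cons b ` aut_lang (d s b) d S0 S1 S1"
    using summable_on_subset_banach[OF sm] by blast
  then have "(Pw p \<circ> Cons b) summable_on aut_lang (d s b) d S0 S1 S1"
    by (subst (asm) summable_on_reindex) auto
  then have "(\<lambda>w. (if b then p else 1 - p) * Pw p w) summable_on aut_lang (d s b) d S0 S1 S1"
    by (simp add: o_def Pw_Cons)
  then show ?thesis using p by (subst (asm) summable_on_cmult_right') auto
qed

lemma summable_star:
  assumes "Pw p summable_on aut_lang s d S0 S1 S1" "okp d Fin s u" "0 < p" "p < 1"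
  shows "Pw p summable_on aut_lang (delta_star d s u) d S0 S1 S1"
  using assms
proof (induction u arbitrary: s)
  case Nil then show ?case by simp
next
  case (Cons b u)
  then show ?case using summable_step[of p s b] by simp
qed

lemma U_eq:
  assumes sm: "Pw p summable_on aut_lang s d S0 S1 S1" and s: "s \<notin> Fin"
  shows "U p s = p * U p (d s True) + (1 - p) * U p (d s False)"
proof -
  let ?A = "\<lambda>b. aut_lang (d s b) d S0 S1 S1"
  have split: "aut_lang s d S0 S1 S1 = Cons True ` ?A True \<union> Cons False ` ?A False"
    using lang_split[OF s, of S1] by auto
  have sm1: "Pw p summable_on Cons b ` ?A b" for b
    using summable_on_subset_banach[OF sm] split by (cases b) auto
  have r: "infsum (Pw p) (Cons b ` ?A b) = (if b then p else 1 - p) * U p (d s b)" for b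
  proof -
    have "infsum (Pw p) (Cons b ` ?A b) = infsum (Pw p \<circ> Cons b) (?A b)"
      by (rule infsum_reindex) auto
    also have "\<dots> = infsum (\<lambda>w. (if b then p else 1 - p) * Pw p w) (?A b)"
      by (simp add: o_def Pw_Cons)
    also have "\<dots> = (if b then p else 1 - p) * U p (d s b)"
      unfolding U_def by (rule infsum_cmult_right')
    finally show ?thesis .
  qed
  have "U p s = infsum (Pw p) (Cons True ` ?A True) + infsum (Pw p) (Cons False ` ?A False)"
    unfolding U_def split by (rule infsum_Un_disjoint[OF sm1 sm1]) auto
  then show ?thesis using r[of True] r[of False] by simp
qed

end

locale aut2 = aut s0 d S0 S1 for s0 :: 's and d S0 S1 +
  fixes e :: "nat \<Rightarrow> 's" and m :: nat
  assumes bij: "bij_betw e {0..<m} T"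
begin

definition Amat :: "'a::comm_ring_1 \<Rightarrow> 'a mat" where
  "Amat p = mat m m (\<lambda>(i,j). (if i = j then 1 else 0) - (if d (e i) True = e j then p else 0) - (if d (e i) False = e j then 1 - p else 0))"

definition bvec :: "'a::comm_ring_1 \<Rightarrow> 'a vec" where
  "bvec p = vec m (\<lambda>i. (if d (e i) True \<in> S1 then p else 0) + (if d (e i) False \<in> S1 then 1 - p else 0))"

definition Zf :: "('s \<Rightarrow> 'a::comm_ring_1) \<Rightarrow> 's \<Rightarrow> 'a" where "Zf Y s = (if s \<in> T then Y s else 0)"

definition W :: "'s \<Rightarrow> real" where "W s = (if s \<in> S1 then 1 else 0)"

lemma finT: "finite T" using bij bij_betw_finite by blast

lemma e_T: "i < m \<Longrightarrow> e i \<in> T" using bij bij_betw_apply by fastforce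

lemma T_e: "s \<in> T \<Longrightarrow> \<exists>i<m. e i = s"
  using bij unfolding bij_betw_def by force

lemma inv_e: "i < m \<Longrightarrow> inv_into {0..<m} e (e i) = i"
  using bij unfolding bij_betw_def by (simp add: inv_into_f_f)

lemma e_inv: "s \<in> T \<Longrightarrow> e (inv_into {0..<m} e s) = s" "s \<in> T \<Longrightarrow> inv_into {0..<m} e s < m"
proof -
  assume s: "s \<in> T"
  have im: "e ` {0..<m} = T" using bij unfolding bij_betw_def by auto
  show "e (inv_into {0..<m} e s) = s" using s im by (simp add: f_inv_into_f)
  have "inv_into {0..<m} e s \<in> {0..<m}" using s im by (intro inv_into_into) simp
  then show "inv_into {0..<m} e s < m" by simp
qed

lemma sum_ind: "(\<Sum>j = 0..<m. (if t = e j then G (e j) else 0)) = (if t \<in> T then G t else (0::'a::comm_ring_1))"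
proof -
  have "(\<Sum>j = 0..<m. (if t = e j then G (e j) else 0)) = (\<Sum>s\<in>T. (if t = s then G s else 0))"
    using sum.reindex_bij_betw[OF bij, of "\<lambda>s. if t = s then G s else 0"] by simp
  also have "\<dots> = (if t \<in> T then G t else 0)" using finT by (simp add: sum.delta)
  finally show ?thesis .
qed

lemma Amat_dims[simp]: "dim_row (Amat p) = m" "dim_col (Amat p) = m" by (simp_all add: Amat_def)

lemma Amat_carrier: "Amat p \<in> carrier_mat m m" by (simp add: Amat_def)
lemma bvec_carrier: "bvec p \<in> carrier_vec m" by (simp add: bvec_def)

lemma mult_eq:
  assumes i: "i < m"
  shows "(Amat p *\<^sub>v vec m (\<lambda>j. Y (e j))) $ i = Y (e i) - p * Zf Y (d (e i) True) - (1 - p) * Zf Y (d (e i) False)"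
proof -
  have "(Amat p *\<^sub>v vec m (\<lambda>j. Y (e j))) $ i = (\<Sum>j = 0..<m. ((if i = j then 1 else 0) - (if d (e i) True = e j then p else 0) - (if d (e i) False = e j then 1 - p else 0)) * Y (e j))"
    using i by (simp add: Amat_def mult_mat_vec_def scalar_prod_def)
  also have "\<dots> = (\<Sum>j = 0..<m. (if i = j then Y (e j) else 0)) - (\<Sum>j = 0..<m. (if d (e i) True = e j then p * Y (e j) else 0)) - (\<Sum>j = 0..<m. (if d (e i) False = e j then (1 - p) * Y (e j) else 0))"
    unfolding sum_subtractf[symmetric] by (rule sum.cong) (auto simp: algebra_simps)
  also have "\<dots> = Y (e i) - p * Zf Y (d (e i) True) - (1 - p) * Zf Y (d (e i) False)"
  proof -
    have s1: "(\<Sum>j = 0..<m. if d (e i) b = e j then c * Y (e j) else 0) = c * Zf Y (d (e i) b)" for b c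
      using sum_ind[of "d (e i) b" "\<lambda>s. c * Y s"] by (simp add: Zf_def)
    have s0: "(\<Sum>j = 0..<m. (if i = j then Y (e j) else 0)) = Y (e i)"
      using i by (simp add: sum.delta)
    show ?thesis unfolding s0 s1 ..
  qed
  finally show ?thesis .
qed

lemma bvec_eq: "i < m \<Longrightarrow> bvec p $ i = p * W (d (e i) True) + (1 - p) * W (d (e i) False)"
  by (simp add: bvec_def W_def)

lemma T_S1: "s \<in> T \<Longrightarrow> s \<notin> S1" using T_notF by blast

lemma sol_harm:
  fixes p c :: real
  assumes sol: "\<forall>i<m. (Amat p *\<^sub>v vec m (\<lambda>j. Y (e j))) $ i = c * bvec p $ i"
  shows "harm p (\<lambda>s. Zf Y s + c * W s)"
  unfolding harm_def
proof
  fix s assume s: "s \<in> T"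
  then obtain i where i: "i < m" "e i = s" using T_e by blast
  have "Y (e i) - p * Zf Y (d (e i) True) - (1 - p) * Zf Y (d (e i) False) = c * (p * W (d (e i) True) + (1 - p) * W (d (e i) False))"
    using sol i mult_eq bvec_eq by metis
  moreover have "Zf Y s + c * W s = Y s" using s T_S1[OF s] by (simp add: Zf_def W_def)
  ultimately show "Zf Y s + c * W s = p * (Zf Y (d s True) + c * W (d s True)) + (1 - p) * (Zf Y (d s False) + c * W (d s False))"
    using i by (simp add: algebra_simps)
qed

lemma harm_sol:
  fixes p :: real
  assumes h: "\<forall>s\<in>T. Y s = p * (Zf Y (d s True) + W (d s True)) + (1 - p) * (Zf Y (d s False) + W (d s False))"
  shows "Amat p *\<^sub>v vec m (\<lambda>j. Y (e j)) = bvec p"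
proof (rule eq_vecI)
  fix i assume "i < dim_vec (bvec p)"
  then have i: "i < m" by (simp add: bvec_def)
  show "(Amat p *\<^sub>v vec m (\<lambda>j. Y (e j))) $ i = bvec p $ i"
    unfolding mult_eq[OF i] bvec_eq[OF i] using h e_T[OF i] by (simp add: algebra_simps)
next
  show "dim_vec (Amat p *\<^sub>v vec m (\<lambda>j. Y (e j))) = dim_vec (bvec p)"
    by (simp add: Amat_def bvec_def)
qed

lemma harm_neg: "harm p y \<Longrightarrow> harm p (\<lambda>s. - y s)"
  unfolding harm_def by (auto simp: algebra_simps)

lemma harm_one_minus: "harm p y \<Longrightarrow> harm p (\<lambda>s. 1 - y s)"
  unfolding harm_def by (auto simp: algebra_simps)

lemma det_nonzero:
  fixes p :: real
  assumes p: "0 < p" "p < 1"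
  shows "det (Amat p) \<noteq> 0"
proof
  assume "det (Amat p) = 0"
  then obtain v where v: "v \<in> carrier_vec m" "v \<noteq> 0\<^sub>v m" "Amat p *\<^sub>v v = 0\<^sub>v m"
    using det_0_iff_vec_prod_zero_field[OF Amat_carrier] by blast
  define Y where "Y s = v $ (inv_into {0..<m} e s)" for s
  have vY: "vec m (\<lambda>j. Y (e j)) = v"
    using v(1) by (intro eq_vecI) (auto simp: Y_def inv_e)
  have h: "harm p (\<lambda>s. Zf Y s + 0 * W s)"
    by (rule sol_harm) (use v vY in auto)
  then have h0: "harm p (Zf Y)" by simp
  have out: "\<forall>t. t \<notin> T \<longrightarrow> 0 \<le> Zf Y t" "\<forall>t. t \<notin> T \<longrightarrow> 0 \<le> - Zf Y t"
    by (auto simp: Zf_def)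
  have z: "Zf Y t = 0" for t
    using minp[OF finT h0 p out(1), of t] minp[OF finT harm_neg[OF h0] p out(2), of t] by simp
  have "Y (e j) = 0" if "j < m" for j using z[of "e j"] e_T[OF that] by (simp add: Zf_def)
  then have "v = 0\<^sub>v m"
    using v(1) by (intro eq_vecI) (auto simp: vY[symmetric])
  then show False using v(2) by simp
qed

lemma cramer_ratio:
  fixes p :: real
  assumes x: "x \<in> carrier_vec m" and sol: "Amat p *\<^sub>v x = bvec p" and k: "k < m" and p: "0 < p" "p < 1"
  shows "det (replace_col (Amat p) (bvec p) k) / det (Amat p) = x $ k"
  using cramer_lemma_mat[OF Amat_carrier x k, of p] sol det_nonzero[OF p] by simp


lemma ratio_bounds:
  fixes p :: real
  assumes p: "0 < p" "p < 1" and s0T: "s0 \<in> T"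
    and w1: "delta_star d s0 w1 \<in> S1" "okp d Fin s0 w1"
    and w0: "delta_star d s0 w0 \<in> S0" "okp d Fin s0 w0"
  shows "0 < det (replace_col (Amat p) (bvec p) (inv_into {0..<m} e s0)) / det (Amat p) \<and>
         det (replace_col (Amat p) (bvec p) (inv_into {0..<m} e s0)) / det (Amat p) < 1"
proof -
  let ?k = "inv_into {0..<m} e s0"
  have "Amat p \<in> Units (ring_mat TYPE(real) m ())"
    by (rule det_non_zero_imp_unit[OF Amat_carrier det_nonzero[OF p]])
  then obtain B where B: "B \<in> carrier_mat m m" "Amat p * B = 1\<^sub>m m"
    unfolding Units_def ring_mat_def by auto
  define x where "x = B *\<^sub>v bvec p"
  have xc: "x \<in> carrier_vec m" using B by (simp add: x_def bvec_carrier)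
  have sol: "Amat p *\<^sub>v x = bvec p"
    unfolding x_def using B bvec_carrier Amat_carrier
    by (metis assoc_mult_mat_vec one_mult_mat_vec)
  define Y where "Y s = x $ (inv_into {0..<m} e s)" for s
  have vY: "vec m (\<lambda>j. Y (e j)) = x"
    using xc by (intro eq_vecI) (auto simp: Y_def inv_e)
  define y where "y s = Zf Y s + 1 * W s" for s
  have h: "harm p y" unfolding y_def
    by (rule sol_harm) (use sol vY in auto)
  have out1: "\<forall>t. t \<notin> T \<longrightarrow> 0 \<le> y t" by (auto simp: y_def Zf_def W_def)
  have out2: "\<forall>t. t \<notin> T \<longrightarrow> 0 \<le> 1 - y t" by (auto simp: y_def Zf_def W_def)
  have ge0: "\<forall>t. 0 \<le> y t" using minp[OF finT h p out1] by blast
  have ge1: "\<forall>t. 0 \<le> 1 - y t" using minp[OF finT harm_one_minus[OF h] p out2] by blast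
  have ys0: "y s0 = x $ ?k" using s0T T_S1[OF s0T] by (simp add: y_def Zf_def W_def Y_def)
  have pre1: "\<forall>w'. proper_prefix w' w1 \<longrightarrow> delta_star d s0 w' \<in> T"
    using prefT[OF s0_R w1(2)] w1(1) by blast
  have pre0: "\<forall>w'. proper_prefix w' w0 \<longrightarrow> delta_star d s0 w' \<in> T"
    using prefT[OF s0_R w0(2)] w0(1) by blast
  have pos: "0 < y s0"
  proof (rule ccontr)
    assume "\<not> 0 < y s0"
    then have "y s0 = 0" using ge0[rule_format, of s0] by linarith
    then have "y (delta_star d s0 w1) = 0" using propagate[OF h p ge0 _ pre1] by blast
    moreover have "y (delta_star d s0 w1) = 1"
      using w1(1) T_S1 by (auto simp: y_def Zf_def W_def)
    ultimately show False by simp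
  qed
  have lt: "y s0 < 1"
  proof (rule ccontr)
    assume "\<not> y s0 < 1"
    then have "1 - y s0 = 0" using ge1 by (smt (verit))
    then have "1 - y (delta_star d s0 w0) = 0"
      using propagate[OF harm_one_minus[OF h] p ge1 _ pre0] by blast
    moreover have "y (delta_star d s0 w0) = 0"
      using w0(1) disj T_notF by (auto simp: y_def Zf_def W_def)
    ultimately show False by simp
  qed
  have "det (replace_col (Amat p) (bvec p) ?k) / det (Amat p) = x $ ?k"
    by (rule cramer_ratio[OF xc sol e_inv(2)[OF s0T] p])
  then show ?thesis using pos lt ys0 by simp
qed

lemma ratio_D:
  fixes p :: real
  assumes p: "0 < p" "p < 1" and s0T: "s0 \<in> T"
    and sm: "Pw p summable_on aut_lang s0 d S0 S1 S1"
  shows "det (replace_col (Amat p) (bvec p) (inv_into {0..<m} e s0)) / det (Amat p) = U p s0"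
proof -
  have smT: "Pw p summable_on aut_lang s d S0 S1 S1" if "s \<in> T" for s
  proof -
    have "s \<in> R" using that by (rule T_R)
    then obtain u where u: "s = delta_star d s0 u" "okp d Fin s0 u" unfolding R_def by auto
    show ?thesis using summable_star[OF sm u(2) p] u(1) by simp
  qed
  have succ: "U p (d s b) = Zf (U p) (d s b) + W (d s b)" if s: "s \<in> T" for s b
  proof (cases "d s b \<in> T")
    case True then show ?thesis using T_S1 by (simp add: Zf_def W_def)
  next
    case nT: False
    show ?thesis
    proof (cases "d s b \<in> S1")
      case True then show ?thesis using nT by (simp add: Zf_def W_def U_def lang_S1)
    next
      case nS1: False
      show ?thesis
      proof (cases "d s b \<in> S0")
        case True then show ?thesis using nT nS1 by (simp add: Zf_def W_def U_def lang_S0)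
      next
        case False then show ?thesis using nT nS1 lang_dead[OF s nT] by (simp add: Zf_def W_def U_def)
      qed
    qed
  qed
  have "\<forall>s\<in>T. U p s = p * (Zf (U p) (d s True) + W (d s True)) + (1 - p) * (Zf (U p) (d s False) + W (d s False))"
    using U_eq[OF smT T_notF] succ by simp
  then have sol: "Amat p *\<^sub>v vec m (\<lambda>j. U p (e j)) = bvec p" by (rule harm_sol)
  have "det (replace_col (Amat p) (bvec p) (inv_into {0..<m} e s0)) / det (Amat p) = vec m (\<lambda>j. U p (e j)) $ (inv_into {0..<m} e s0)"
    by (rule cramer_ratio[OF _ sol e_inv(2)[OF s0T] p]) simp
  then show ?thesis using e_inv[OF s0T] by simp
qed

lemma map_Amat: assumes "comm_ring_hom h" shows "map_mat h (Amat p) = Amat (h p)"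
proof -
  interpret h: comm_ring_hom h by fact
  show ?thesis by (rule eq_matI) (auto simp: Amat_def hom_distribs)
qed

lemma map_bvec: assumes "comm_ring_hom h" shows "map_vec h (bvec p) = bvec (h p)"
proof -
  interpret h: comm_ring_hom h by fact
  show ?thesis by (rule eq_vecI) (auto simp: bvec_def hom_distribs)
qed

lemma map_replace_col: "map_mat h (replace_col A b k) = replace_col (map_mat h A) (map_vec h b) k"
  if "b \<in> carrier_vec (dim_row A)"
  using that by (intro eq_matI) (auto simp: replace_col_def)

lemma degree_Amat: "i < m \<Longrightarrow> j < m \<Longrightarrow> degree (Amat [:0, 1::int:] $$ (i, j)) \<le> 1"
  by (auto simp: Amat_def intro!: degree_diff_le)

lemma degree_bvec: "i < m \<Longrightarrow> degree (bvec [:0, 1::int:] $ i) \<le> 1"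
  by (auto simp: bvec_def intro!: degree_add_le degree_diff_le)

lemma degree_replace: "k < m \<Longrightarrow> i < m \<Longrightarrow> j < m \<Longrightarrow> degree (replace_col (Amat [:0, 1::int:]) (bvec [:0, 1::int:]) k $$ (i, j)) \<le> 1"
  using degree_Amat degree_bvec by (auto simp: replace_col_def)

end

lemma comm_ring_hom_eval: "comm_ring_hom (\<lambda>q::int poly. poly (map_poly (of_int :: int \<Rightarrow> real) q) x)"
proof -
  show ?thesis by unfold_locales (simp_all add: of_int_poly_hom.hom_add of_int_poly_hom.hom_mult)
qed


lemma delta_star_in: "s \<in> S \<Longrightarrow> \<forall>s\<in>S. \<forall>b. d s b \<in> S \<Longrightarrow> delta_star d s u \<in> S"
  by (induction u arbitrary: s) auto

theorem proposition2p3: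
  fixes D :: "real set" and f :: "real \<Rightarrow> real" and n :: nat
    and S :: "'s set" and s0 :: 's and \<delta> :: "'s \<Rightarrow> bool \<Rightarrow> 's" and S0 S1 :: "'s set"
  assumes "D \<subseteq> {0<..<1}" and "D \<noteq> {}"
    and "\<forall>p\<in>D. 0 < f p \<and> f p < 1"
    and "automaton_simulates S s0 \<delta> S0 S1 D f"
    and "card S = n"
  shows "\<exists>g h :: int poly. degree g \<le> n \<and> degree h \<le> n \<and>
     (\<forall>x\<in>{0<..<1::real}. poly (map_poly of_int h) x \<noteq> 0) \<and>
     (\<forall>x\<in>{0<..<1::real}. 0 < poly (map_poly of_int g) x / poly (map_poly of_int h) x \<and>
                         poly (map_poly of_int g) x / poly (map_poly of_int h) x < 1) \<and>
     (\<forall>p\<in>D. poly (map_poly of_int g) p / poly (map_poly of_int h) p = f p)"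
proof -
  have FA: "finite_automaton S s0 \<delta> S0 S1"
    and sim: "simulation D f (aut_lang s0 \<delta> S0 S1 S0) (aut_lang s0 \<delta> S0 S1 S1)"
    using assms(4) unfolding automaton_simulates_def by auto
  have finS: "finite S" and s0S: "s0 \<in> S" and clos: "\<forall>s\<in>S. \<forall>b. \<delta> s b \<in> S"
    and disj: "S0 \<inter> S1 = {}"
    using FA unfolding finite_automaton_def by auto
  interpret aut s0 \<delta> S0 S1 by unfold_locales (rule disj)
  let ?L0 = "aut_lang s0 \<delta> S0 S1 S0"
  let ?L1 = "aut_lang s0 \<delta> S0 S1 S1"
  have hs: "\<forall>p\<in>D. (Pw p has_sum 1) (?L0 \<union> ?L1) \<and> (Pw p has_sum f p) ?L1"
    using sim unfolding simulation_def by auto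
  obtain p0 where p0: "p0 \<in> D" using assms(2) by auto
  have L1ne: "?L1 \<noteq> {}"
  proof
    assume "?L1 = {}"
    then have "(Pw p0 has_sum f p0) {}" using hs p0 by auto
    then have "f p0 = 0" using has_sum_unique has_sum_empty by blast
    then show False using assms(3) p0 by auto
  qed
  have L0ne: "?L0 \<noteq> {}"
  proof
    assume "?L0 = {}"
    then have "(Pw p0 has_sum 1) ?L1" "(Pw p0 has_sum f p0) ?L1" using hs p0 by auto
    then have "f p0 = 1" using has_sum_unique by blast
    then show False using assms(3) p0 by auto
  qed
  obtain w1 where w1: "delta_star \<delta> s0 w1 \<in> S1" "okp \<delta> Fin s0 w1"
    using L1ne by (auto simp: aut_lang_okp)
  obtain w0 where w0: "delta_star \<delta> s0 w0 \<in> S0" "okp \<delta> Fin s0 w0"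
    using L0ne by (auto simp: aut_lang_okp)
  have s0nF: "s0 \<notin> Fin"
  proof
    assume s0F: "s0 \<in> Fin"
    have "w1 = []" using okp_nonempty[OF w1(2)] s0F by blast
    moreover have "w0 = []" using okp_nonempty[OF w0(2)] s0F by blast
    ultimately show False using w1(1) w0(1) disj by auto
  qed
  have s0T: "s0 \<in> T" unfolding T_def using s0_R s0nF w1 by blast
  have TS: "T \<subseteq> S" unfolding T_def R_def using delta_star_in[OF s0S clos] by auto
  have finT: "finite T" using finite_subset[OF TS finS] .
  have cardT: "card T \<le> n" using card_mono[OF finS TS] assms(5) by simp
  obtain e where e: "bij_betw e {0..<card T} T" using ex_bij_betw_nat_finite[OF finT] by blast
  interpret aut2 s0 \<delta> S0 S1 e "card T" by unfold_locales (rule e)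
  define k where "k = inv_into {0..<card T} e s0"
  have k: "k < card T" unfolding k_def using e_inv(2)[OF s0T] .
  define X where "X = [:0, 1::int:]"
  define g where "g = det (replace_col (Amat X) (bvec X) k)"
  define h where "h = det (Amat X)"
  have ev: "poly (map_poly of_int (det A)) x = det (map_mat (\<lambda>q. poly (map_poly of_int q) x) A)"
    for A :: "int poly mat" and x :: real
    by (simp add: comm_ring_hom.hom_det[OF comm_ring_hom_eval])
  have evX: "(\<lambda>q. poly (map_poly of_int q) x) X = x" for x :: real
    by (simp add: X_def)
  have evh: "poly (map_poly of_int h) x = det (Amat x)" for x :: real
    unfolding h_def ev map_Amat[OF comm_ring_hom_eval] evX ..
  have evg: "poly (map_poly of_int g) x = det (replace_col (Amat x) (bvec x) k)" for x :: real
  proof -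
    have c: "bvec X \<in> carrier_vec (dim_row (Amat X))" by (simp add: bvec_carrier)
    show ?thesis
      unfolding g_def ev map_replace_col[OF c] map_Amat[OF comm_ring_hom_eval]
        map_bvec[OF comm_ring_hom_eval] evX ..
  qed
  have dh: "degree h \<le> n"
  proof -
    have "degree h \<le> 1 * card T"
      unfolding h_def X_def by (rule degree_det_le[OF degree_Amat Amat_carrier])
    then show ?thesis using cardT by simp
  qed
  have dg: "degree g \<le> n"
  proof -
    have rc: "replace_col (Amat X) (bvec X) k \<in> carrier_mat (card T) (card T)"
      by (simp add: replace_col_def)
    have "degree g \<le> 1 * card T"
      unfolding g_def using degree_replace[OF k] rc unfolding X_def by (intro degree_det_le) auto
    then show ?thesis using cardT by simp
  qed
  have A1: "\<forall>x\<in>{0<..<1::real}. poly (map_poly of_int h) x \<noteq> 0"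
  proof
    fix x :: real assume "x \<in> {0<..<1}"
    then have x: "0 < x" "x < 1" by auto
    show "poly (map_poly of_int h) x \<noteq> 0" unfolding evh by (rule det_nonzero[OF x])
  qed
  have A2: "\<forall>x\<in>{0<..<1::real}. 0 < poly (map_poly of_int g) x / poly (map_poly of_int h) x \<and>
                         poly (map_poly of_int g) x / poly (map_poly of_int h) x < 1"
  proof
    fix x :: real assume "x \<in> {0<..<1}"
    then have x: "0 < x" "x < 1" by auto
    show "0 < poly (map_poly of_int g) x / poly (map_poly of_int h) x \<and>
                         poly (map_poly of_int g) x / poly (map_poly of_int h) x < 1"
      unfolding evg evh k_def using ratio_bounds[OF x s0T w1 w0] by blast
  qed
  have A3: "\<forall>p\<in>D. poly (map_poly of_int g) p / poly (map_poly of_int h) p = f p"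
  proof
    fix p assume pD: "p \<in> D"
    then have p: "0 < p" "p < 1" using assms(1) by auto
    have hp: "(Pw p has_sum f p) ?L1" using hs pD by auto
    have "poly (map_poly of_int g) p / poly (map_poly of_int h) p = U p s0"
      unfolding evg evh k_def by (rule ratio_D[OF p s0T has_sum_imp_summable[OF hp]])
    also have "\<dots> = f p" unfolding U_def using hp by (rule infsumI)
    finally show "poly (map_poly of_int g) p / poly (map_poly of_int h) p = f p" .
  qed
  show ?thesis using dg dh A1 A2 A3 by blast
qed

end
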